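(* Let $W_{32,17}$ be the $32\times 32$ matrix $\begin{pmatrix} A & B\\ -B^T & A^T\end{pmatrix}$, where $A$ and $B$ are $16\times 16$ negacirculant matrices with first rows $r_A=(0,0,1,1,0,0,0,0,1,0,0,0,0,1,1,0)$ and $r_B=(0,1,-1,-1,0,-1,1,0,1,-1,1,1,1,0,-1,1)$ (a skew-symmetric weighing matrix of order $32$ and weight $17$). Let $C_3(W_{32,17})$ be the ternary code of length $64$ with generator matrix $(I\ \ W_{32,17})$, entries read modulo $3$. Then $A_3(C_3(W_{32,17}))$ contains a $7k$-frame and a $23k$-frame for every positive integer $k$.
   Context: An $N\times N$ negacirculant matrix with first row $(r_0,\dots,r_{N-1})$ is the matrix whose $(i,j)$ entry ($0\le i,j\le N-1$) is $r_{j-i}$ if $j\ge i$ and $-r_{N+j-i}$ if $j<i$. A skew-symmetric weighing matrix of order $n$ and weight $w$ is an $n\times n$ $(0,\pm1)$-matrix $W$ with $W^T=-W$ and $WW^T=wI$. Construction A: with $\rho:\mathbb{Z}_k\to\mathbb{Z}$ sending $0,1,\dots,k-1$ to $0,1,\dots,k-1$, for a $\mathbb{Z}_k$-code $C$ of length $N$ set $A_k(C)=\frac{1}{\sqrt{k}}\{\rho(C)+k\mathbb{Z}^N\}$. A $t$-frame of a lattice in dimension $N$ is a set of $N$ lattice vectors $f_1,\dots,f_N$ with $(f_i,f_j)=t\,\delta_{i,j}$. *)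

theory Defs
  imports Complex_Main
begin

text \<open>Matrices are functions nat => nat => int, meaningful on indices below the order.
  Vectors of length N are functions nat => _, meaningful on indices below N
  (lattice vectors are required to vanish outside, for definiteness).\<close>

definition negacirculant :: "nat \<Rightarrow> int list \<Rightarrow> nat \<Rightarrow> nat \<Rightarrow> int" where
  "negacirculant N r i j = (if i \<le> j then r ! (j - i) else - (r ! (N + j - i)))"

definition rA :: "int list" where
  "rA = [0,0,1,1,0,0,0,0,1,0,0,0,0,1,1,0]"

definition rB :: "int list" where
  "rB = [0,1,-1,-1,0,-1,1,0,1,-1,1,1,1,0,-1,1]"

definition matA :: "nat \<Rightarrow> nat \<Rightarrow> int" where "matA = negacirculant 16 rA"
definition matB :: "nat \<Rightarrow> nat \<Rightarrow> int" where "matB = negacirculant 16 rB"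

definition W32 :: "nat \<Rightarrow> nat \<Rightarrow> int" where
  "W32 i j =
     (if i < 16 then (if j < 16 then matA i j else matB i (j - 16))
      else (if j < 16 then - matB j (i - 16) else matA (j - 16) (i - 16)))"

definition gen_IW :: "nat \<Rightarrow> (nat \<Rightarrow> nat \<Rightarrow> int) \<Rightarrow> nat \<Rightarrow> nat \<Rightarrow> int" where
  "gen_IW n W i j = (if j < n then (if i = j then 1 else 0) else W i (j - n))"

text \<open>The Z_k-code of length N generated by the m rows of G (entries read mod k),
  with codewords represented by their representatives in {0,...,k-1}
  (i.e. already composed with rho); zero outside the length.\<close>
definition code_gen :: "int \<Rightarrow> nat \<Rightarrow> nat \<Rightarrow> (nat \<Rightarrow> nat \<Rightarrow> int) \<Rightarrow> (nat \<Rightarrow> int) set" where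
  "code_gen k m N G = {c. \<exists>a :: nat \<Rightarrow> int.
      (\<forall>j<N. c j = (\<Sum>i<m. a i * G i j) mod k) \<and> (\<forall>j\<ge>N. c j = 0)}"

definition C3W :: "(nat \<Rightarrow> int) set" where
  "C3W = code_gen 3 32 64 (gen_IW 32 W32)"

definition constrA :: "int \<Rightarrow> nat \<Rightarrow> (nat \<Rightarrow> int) set \<Rightarrow> (nat \<Rightarrow> real) set" where
  "constrA k N C = {v. \<exists>c\<in>C. \<exists>z :: nat \<Rightarrow> int.
      (\<forall>j<N. v j = real_of_int (c j + k * z j) / sqrt (real_of_int k)) \<and> (\<forall>j\<ge>N. v j = 0)}"

definition inner_N :: "nat \<Rightarrow> (nat \<Rightarrow> real) \<Rightarrow> (nat \<Rightarrow> real) \<Rightarrow> real" where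
  "inner_N N u v = (\<Sum>j<N. u j * v j)"

definition has_frame :: "nat \<Rightarrow> (nat \<Rightarrow> real) set \<Rightarrow> real \<Rightarrow> bool" where
  "has_frame N L t = (\<exists>f :: nat \<Rightarrow> nat \<Rightarrow> real.
      (\<forall>i<N. f i \<in> L) \<and>
      (\<forall>i<N. \<forall>j<N. inner_N N (f i) (f j) = (if i = j then t else 0)))"

end

theory Submission
  imports Defs "HOL-Computational_Algebra.Primes" "HOL-Number_Theory.Cong"
begin


definition s4 :: "int \<Rightarrow> bool" where
  "s4 n \<longleftrightarrow> (\<exists>a b c d. n = a^2+b^2+c^2+d^2)"

lemma euler4: fixes x1 x2 x3 x4 y1 y2 y3 y4 :: int shows
 "(x1^2+x2^2+x3^2+x4^2)*(y1^2+y2^2+y3^2+y4^2) = (x1*y1+x2*y2+x3*y3+x4*y4)^2 + (x1*y2-x2*y1+x3*y4-x4*y3)^2 + (x1*y3-x3*y1+x4*y2-x2*y4)^2 + (x1*y4-x4*y1+x2*y3-x3*y2)^2"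
  by (simp add: power2_eq_square algebra_simps)

lemma s4_mult: "s4 a \<Longrightarrow> s4 b \<Longrightarrow> s4 (a*b)"
  unfolding s4_def using euler4 by metis

lemma sq4_le: fixes y m :: int assumes "(2*y)^2 \<le> m^2" shows "4*y^2 \<le> m^2"
  using assms by (simp add: power_mult_distrib)

lemma descent_step:
  fixes m p y1 y2 y3 y4 t1 t2 t3 t4 :: int
  assumes p: "prime p" and m: "1 < m" "m < p"
    and e: "m*p = (y1+m*t1)^2+(y2+m*t2)^2+(y3+m*t3)^2+(y4+m*t4)^2"
    and b1: "(2*y1)^2 \<le> m^2" and b2: "(2*y2)^2 \<le> m^2"
    and b3: "(2*y3)^2 \<le> m^2" and b4: "(2*y4)^2 \<le> m^2"
  shows "\<exists>r. 0 < r \<and> r < m \<and> s4 (r*p)"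
proof -
  define r where "r = p - 2*(y1*t1+y2*t2+y3*t3+y4*t4) - m*(t1^2+t2^2+t3^2+t4^2)"
  have pr: "p = r + 2*(y1*t1+y2*t2+y3*t3+y4*t4) + m*(t1^2+t2^2+t3^2+t4^2)"
    unfolding r_def by simp
  have ys: "m * (y1^2+y2^2+y3^2+y4^2) = m * (m*r)"
    using e unfolding r_def by (simp add: power2_eq_square algebra_simps)
  hence ys: "y1^2+y2^2+y3^2+y4^2 = m*r" using m by simp
  have ndvd: "\<not> m dvd p"
  proof
    assume "m dvd p"
    moreover have "0 \<le> m" using m by simp
    ultimately have "m = 1 \<or> m = p" using p unfolding prime_int_iff by blast
    then show False using m by simp
  qed
  have r0: "r \<ge> 0"
  proof -
    have "0 \<le> y1^2+y2^2+y3^2+y4^2" by simp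
    hence "0 \<le> m*r" using ys by simp
    thus ?thesis using m by (simp add: zero_le_mult_iff)
  qed
  have "4*(m*r) \<le> 4*(m*m)"
    using ys sq4_le[OF b1] sq4_le[OF b2] sq4_le[OF b3] sq4_le[OF b4]
    by (simp add: power2_eq_square)
  hence rm: "r \<le> m" using m by simp
  have rn0: "r \<noteq> 0"
  proof
    assume "r = 0"
    hence "y1^2+y2^2+y3^2+y4^2 = 0" using ys by simp
    hence "y1 = 0" "y2 = 0" "y3 = 0" "y4 = 0" by (auto simp: add_nonneg_eq_0_iff)
    hence "p = m*(t1^2+t2^2+t3^2+t4^2)" using pr \<open>r = 0\<close> by simp
    thus False using ndvd by simp
  qed
  have rnm: "r \<noteq> m"
  proof
    assume "r = m"
    have "4*y1^2 = m^2" "4*y2^2 = m^2" "4*y3^2 = m^2" "4*y4^2 = m^2"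
      using ys \<open>r = m\<close> sq4_le[OF b1] sq4_le[OF b2] sq4_le[OF b3] sq4_le[OF b4]
      by (simp_all add: power2_eq_square)
    hence "(2*y1)^2 = m^2" "(2*y2)^2 = m^2" "(2*y3)^2 = m^2" "(2*y4)^2 = m^2"
      by (simp_all add: power_mult_distrib)
    hence d: "m dvd 2*y1" "m dvd 2*y2" "m dvd 2*y3" "m dvd 2*y4"
      unfolding power2_eq_iff by auto
    have "m dvd 2*(y1*t1+y2*t2+y3*t3+y4*t4)"
    proof -
      have "2*(y1*t1+y2*t2+y3*t3+y4*t4) = (2*y1)*t1+(2*y2)*t2+(2*y3)*t3+(2*y4)*t4"
        by (simp add: algebra_simps)
      thus ?thesis using d by (metis dvd_add dvd_mult2)
    qed
    hence "m dvd p" using pr \<open>r = m\<close> by simp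
    thus False using ndvd by simp
  qed
  define w1 where "w1 = r + (t1*y1+t2*y2+t3*y3+t4*y4)"
  define w2 where "w2 = t1*y2 - t2*y1 + t3*y4 - t4*y3"
  define w3 where "w3 = t1*y3 - t3*y1 + t4*y2 - t2*y4"
  define w4 where "w4 = t1*y4 - t4*y1 + t2*y3 - t3*y2"
  have "(y1+m*t1)*y1+(y2+m*t2)*y2+(y3+m*t3)*y3+(y4+m*t4)*y4 = (y1^2+y2^2+y3^2+y4^2) + m*(t1*y1+t2*y2+t3*y3+t4*y4)"
    by (simp add: power2_eq_square algebra_simps)
  also have "\<dots> = m*w1" unfolding ys w1_def by (simp add: algebra_simps)
  finally have z1: "(y1+m*t1)*y1+(y2+m*t2)*y2+(y3+m*t3)*y3+(y4+m*t4)*y4 = m*w1" .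
  have z2: "(y1+m*t1)*y2-(y2+m*t2)*y1+(y3+m*t3)*y4-(y4+m*t4)*y3 = m*w2"
    unfolding w2_def by (simp add: algebra_simps)
  have z3: "(y1+m*t1)*y3-(y3+m*t3)*y1+(y4+m*t4)*y2-(y2+m*t2)*y4 = m*w3"
    unfolding w3_def by (simp add: algebra_simps)
  have z4: "(y1+m*t1)*y4-(y4+m*t4)*y1+(y2+m*t2)*y3-(y3+m*t3)*y2 = m*w4"
    unfolding w4_def by (simp add: algebra_simps)
  have "(m*p)*(m*r) = ((y1+m*t1)^2+(y2+m*t2)^2+(y3+m*t3)^2+(y4+m*t4)^2) * (y1^2+y2^2+y3^2+y4^2)"
    by (simp only: e ys)
  also have "\<dots> = (m*w1)^2+(m*w2)^2+(m*w3)^2+(m*w4)^2"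
    by (simp only: euler4 z1 z2 z3 z4)
  also have "\<dots> = (m*m)*(w1^2+w2^2+w3^2+w4^2)"
    by (simp add: power2_eq_square algebra_simps)
  finally have "(m*m)*(p*r) = (m*m)*(w1^2+w2^2+w3^2+w4^2)"
    by (simp add: mult_ac)
  hence "p*r = w1^2+w2^2+w3^2+w4^2" using m by simp
  hence "s4 (r*p)" unfolding s4_def by (metis mult.commute)
  moreover have "0 < r" "r < m" using r0 rm rn0 rnm by auto
  ultimately show ?thesis by blast
qed

lemma descent:
  fixes p :: int assumes p: "prime p"
  shows "0 < m \<Longrightarrow> m < p \<Longrightarrow> s4 (m*p) \<Longrightarrow> s4 p"
proof (induction "nat m" arbitrary: m rule: less_induct)
  case less
  show ?case
  proof (cases "m = 1")
    case True thus ?thesis using less.prems by simp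
  next
    case False
    hence m1: "1 < m" using less.prems by simp
    obtain x1 x2 x3 x4 where e: "m*p = x1^2+x2^2+x3^2+x4^2"
      using less.prems unfolding s4_def by blast
    define h where "h = m div 2"
    define t where "t = (\<lambda>x. (x + h) div m)"
    define y where "y = (\<lambda>x. x - m * t x)"
    have yb: "(2*y x)^2 \<le> m^2" for x
    proof -
      have "y x = (x + h) mod m - h" unfolding y_def t_def
        by (simp add: algebra_simps minus_div_mult_eq_mod[symmetric])
      moreover have "0 \<le> (x+h) mod m" "(x+h) mod m < m" using m1 by simp_all
      moreover have "2*h \<le> m" "m \<le> 2*h+1" unfolding h_def by linarith+
      ultimately have "\<bar>2*y x\<bar> \<le> \<bar>m\<bar>" by linarith
      thus ?thesis by (metis abs_le_square_iff)
    qed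
    have xe: "x = y x + m * t x" for x unfolding y_def by simp
    have "m*p = (y x1+m*t x1)^2+(y x2+m*t x2)^2+(y x3+m*t x3)^2+(y x4+m*t x4)^2"
      using e xe by metis
    from descent_step[OF p m1 \<open>m < p\<close> this yb yb yb yb]
    obtain r where r: "0 < r" "r < m" "s4 (r*p)" by blast
    show ?thesis
      using less.hyps[of r] r less.prems by simp
  qed
qed

lemma small_dvd_eq0: fixes d p :: int assumes "p dvd d" "\<bar>d\<bar> < p" shows "d = 0"
proof (rule ccontr)
  assume "d \<noteq> 0"
  hence "\<bar>p\<bar> \<le> \<bar>d\<bar>" using assms(1) by (rule dvd_imp_le_int)
  thus False using assms(2) by linarith
qed

lemma stepA:
  fixes p :: int assumes p: "prime p" and odd: "odd p"
  shows "\<exists>x y. 0\<le>x \<and> 2*x < p \<and> 0\<le>y \<and> 2*y < p \<and> p dvd x^2+y^2+1"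
proof -
  have p1: "1 < p" using p prime_int_iff by blast
  define I where "I = {0..(p-1) div 2}"
  define f where "f = (\<lambda>x::int. x^2 mod p)"
  define g where "g = (\<lambda>x::int. (-1-x^2) mod p)"
  have Ib: "0 \<le> x \<and> 2*x < p" if "x \<in> I" for x using that odd unfolding I_def by auto
  have key: "x = x'" if "x \<in> I" "x' \<in> I" "p dvd x^2 - x'^2" for x x'
  proof -
    have "x^2 - x'^2 = (x-x')*(x+x')" by (simp add: power2_eq_square algebra_simps)
    hence "p dvd (x-x') \<or> p dvd (x+x')" using that(3) p by (simp add: prime_dvd_mult_iff)
    moreover have "\<bar>x-x'\<bar> < p" "\<bar>x+x'\<bar> < p" using Ib[OF that(1)] Ib[OF that(2)] by auto
    ultimately have "x-x' = 0 \<or> x+x' = 0" using small_dvd_eq0 by blast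
    thus ?thesis using Ib[OF that(1)] Ib[OF that(2)] by auto
  qed
  have injf: "inj_on f I"
    unfolding inj_on_def f_def using key by (simp add: mod_eq_dvd_iff)
  have injg: "inj_on g I"
  proof (rule inj_onI)
    fix x x' assume "x \<in> I" "x' \<in> I" "g x = g x'"
    hence "p dvd (-1-x^2) - (-1-x'^2)" unfolding g_def by (simp add: mod_eq_dvd_iff)
    hence "p dvd -(x^2 - x'^2)" by (simp add: algebra_simps)
    hence "p dvd x^2 - x'^2" by (metis dvd_minus_iff)
    thus "x = x'" using key \<open>x \<in> I\<close> \<open>x' \<in> I\<close> by blast
  qed
  have sub: "f ` I \<union> g ` I \<subseteq> {0..<p}" unfolding f_def g_def using p1 by auto
  have cI: "int (card I) = (p-1) div 2 + 1" unfolding I_def using p1 by simp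
  have "f ` I \<inter> g ` I \<noteq> {}"
  proof
    assume dis: "f ` I \<inter> g ` I = {}"
    have "card (f ` I \<union> g ` I) = card (f ` I) + card (g ` I)"
      by (rule card_Un_disjoint[OF _ _ dis]) (simp_all add: I_def)
    also have "\<dots> = 2 * card I" using card_image[OF injf] card_image[OF injg] by simp
    finally have "card (f ` I \<union> g ` I) = 2 * card I" .
    moreover have "card (f ` I \<union> g ` I) \<le> card {0..<p}" by (rule card_mono[OF _ sub]) simp
    ultimately have "int (2 * card I) \<le> p" using p1 by simp
    thus False using cI odd by (auto elim!: oddE)
  qed
  then obtain x y where xy: "x \<in> I" "y \<in> I" "f x = g y" by auto
  hence "p dvd x^2 - (-1 - y^2)" unfolding f_def g_def by (simp add: mod_eq_dvd_iff)
  hence "p dvd x^2+y^2+1" by (simp add: algebra_simps)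
  thus ?thesis using Ib[OF xy(1)] Ib[OF xy(2)] by blast
qed

lemma s4_prime: fixes p :: int assumes p: "prime p" shows "s4 p"
proof (cases "even p")
  case True
  then obtain q where "p = 2*q" by blast
  hence "2 dvd p" by simp
  hence "(2::int) = 1 \<or> 2 = p" using p unfolding prime_int_iff by (metis zero_le_numeral)
  hence "p = 2" by simp
  then show ?thesis unfolding s4_def by (rule_tac x=1 in exI, rule_tac x=1 in exI, rule_tac x=0 in exI, rule_tac x=0 in exI) simp
next
  case False
  have p1: "1 < p" using p prime_int_iff by blast
  obtain x y where xy: "0\<le>x" "2*x < p" "0\<le>y" "2*y < p" "p dvd x^2+y^2+1"
    using stepA[OF p False] by blast
  then obtain m where m: "x^2+y^2+1 = p*m" by (elim dvdE)
  have "0 < p*m" using m[symmetric] by (simp add: add_pos_nonneg)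
  hence m0: "0 < m" using p1 by (simp add: zero_less_mult_iff)
  have "(2*x)^2 < p^2" "(2*y)^2 < p^2" using xy by (intro power_strict_mono; simp)+
  hence A: "4*(p*m) < 2*(p*p) + 4" unfolding m[symmetric] by (simp add: power_mult_distrib power2_eq_square)
  have B: "2*p \<le> p*p" using p1 by (intro mult_right_mono) simp_all
  have "4*(p*m) < 4*(p*p)" using A B p1 by linarith
  hence "m < p" using p1 by simp
  moreover have "s4 (m*p)" unfolding s4_def
    by (rule_tac x=x in exI, rule_tac x=y in exI, rule_tac x=1 in exI, rule_tac x=0 in exI) (simp add: m mult.commute)
  ultimately show ?thesis using descent[OF p m0] by blast
qed

lemma s4_nat: "s4 (int n)"
proof (induction n rule: less_induct)
  case (less n)
  show ?case
  proof (cases "n \<le> 1")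
    case True
    hence "n = 0 \<or> n = 1" by auto
    moreover have "(0::int) = 0^2+0^2+0^2+0^2" "(1::int) = 1^2+0^2+0^2+0^2" by simp_all
    ultimately show ?thesis unfolding s4_def by (metis of_nat_0 of_nat_1)
  next
    case False
    then obtain p where p: "prime p" "p dvd n" using prime_factor_nat[of n] by auto
    then obtain q where q: "n = p*q" by (elim dvdE)
    have "q < n" using False p(1) q prime_gt_1_nat by (cases "q = 0") auto
    hence "s4 (int q)" by (rule less.IH)
    moreover have "s4 (int p)" using p(1) s4_prime prime_nat_int_transfer by blast
    ultimately show ?thesis using q s4_mult by (simp add: mult.commute)
  qed
qed



lemma WW_list: "\<forall>i\<in>set [0..<32]. \<forall>j\<in>set [0..<32]. (\<Sum>l\<leftarrow>[0..<32]. W32 i l * W32 j l) = (if i=j then 17 else 0)"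
  by code_simp
lemma Wskew_list: "\<forall>i\<in>set [0..<32]. \<forall>j\<in>set [0..<32]. W32 j i = - W32 i j"
  by code_simp

lemma W_orth: "i < 32 \<Longrightarrow> j < 32 \<Longrightarrow> (\<Sum>l<32. W32 i l * W32 j l) = (if i=j then 17 else 0)"
proof -
  assume "i < 32" "j < 32"
  hence "i \<in> set [0..<32]" "j \<in> set [0..<32]" by simp_all
  hence "(\<Sum>l\<leftarrow>[0..<32]. W32 i l * W32 j l) = (if i=j then 17 else 0)" using WW_list by blast
  thus ?thesis by (simp only: interv_sum_list_conv_sum_set_nat atLeast_upt[symmetric])
qed
lemma W_skew: "i < 32 \<Longrightarrow> j < 32 \<Longrightarrow> W32 j i = - W32 i j"
proof -
  assume "i < 32" "j < 32"
  hence "i \<in> set [0..<32]" "j \<in> set [0..<32]" by simp_all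
  thus ?thesis using Wskew_list by blast
qed
lemma W_diag: "i < 32 \<Longrightarrow> W32 i i = 0"
  using W_skew[of i i] by simp

lemma sum_split_nat: "sum f {..<n+m} = sum f {..<n} + (\<Sum>u<m. f (n+u))" for f :: "nat \<Rightarrow> 'a::comm_monoid_add"
  by (induction m) (simp_all add: add.assoc)

lemma sum64: "sum f {..<64} = sum f {..<32} + (\<Sum>u<32. f (32+u))" for f :: "nat \<Rightarrow> 'a::comm_monoid_add"
  using sum_split_nat[of f 32 32] by simp

definition dl :: "nat \<Rightarrow> nat \<Rightarrow> int" where "dl a b = (if a = b then 1 else 0)"

lemma sum_dl_left: "(\<Sum>l<n. dl i l * f l) = (if i < n then f i else 0)"
  unfolding dl_def by (simp add: if_distrib[of "\<lambda>x. x * _"] cong: if_cong)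
lemma sum_dl_right: "(\<Sum>l<n. f l * dl i l) = (if i < n then f i else 0)"
  unfolding dl_def by (simp add: if_distrib[of "\<lambda>x. _ * x"] cong: if_cong)

definition Xm :: "int \<Rightarrow> int \<Rightarrow> int \<Rightarrow> nat \<Rightarrow> nat \<Rightarrow> int" where
  "Xm p q r i l = (if l < 64 then
     (if i < 32 then (if l < 32 then p * dl i l + q * W32 i l else r * dl i (l-32))
      else (if l < 32 then - r * dl (i-32) l else p * dl (i-32) (l-32) + (- q) * W32 (i-32) (l-32)))
     else 0)"

lemma Xm_TL: "i < 32 \<Longrightarrow> l < 32 \<Longrightarrow> Xm p q r i l = p * dl i l + q * W32 i l"
  unfolding Xm_def by simp
lemma Xm_TR: "i < 32 \<Longrightarrow> u < 32 \<Longrightarrow> Xm p q r i (32+u) = r * dl i u"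
  unfolding Xm_def by simp
lemma Xm_BL: "i < 32 \<Longrightarrow> l < 32 \<Longrightarrow> Xm p q r (32+i) l = - r * dl i l"
  unfolding Xm_def by simp
lemma Xm_BR: "i < 32 \<Longrightarrow> u < 32 \<Longrightarrow> Xm p q r (32+i) (32+u) = p * dl i u + (-q) * W32 i u"
  unfolding Xm_def by simp

lemma Xm_gram:
  assumes "i < 64" "j < 64"
  shows "(\<Sum>l<64. Xm p q r i l * Xm p q r j l) = (if i = j then p^2 + 17*q^2 + r^2 else 0)"
proof -
  have A: "(\<Sum>l<32. (p * dl a l + q * W32 a l) * (p * dl b l + q * W32 b l)) = (if a = b then p^2+17*q^2 else 0)"
    if "a < 32" "b < 32" for a b q
  proof -
    have "(\<Sum>l<32. (p * dl a l + q * W32 a l) * (p * dl b l + q * W32 b l)) =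
       p*p*(\<Sum>l<32. dl a l * dl b l) + p*q*(\<Sum>l<32. dl a l * W32 b l) + p*q*(\<Sum>l<32. W32 a l * dl b l) + q*q*(\<Sum>l<32. W32 a l * W32 b l)"
      by (simp add: algebra_simps sum.distrib sum_distrib_left)
    also have "\<dots> = (if a = b then p^2+17*q^2 else 0)"
      using that by (simp only: sum_dl_left sum_dl_right W_orth[OF that]) (cases "a = b", simp_all add: W_diag dl_def power2_eq_square, simp add: W_skew[of a b])
    finally show ?thesis .
  qed
  have D: "(\<Sum>l<32. (c * dl a l) * (d * dl b l)) = c * d * dl a b" if "a < 32" "b < 32" for a b c d
  proof -
    have "(\<Sum>l<32. (c * dl a l) * (d * dl b l)) = c * d * (\<Sum>l<32. dl a l * dl b l)"
      by (simp add: sum_distrib_left algebra_simps)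
    thus ?thesis using that by (simp only: sum_dl_left) (simp add: dl_def)
  qed
  have E: "(\<Sum>l<32. (p * dl a l + q * W32 a l) * (c * dl b l)) = c * (p * dl a b + q * W32 a b)" if "a < 32" "b < 32" for a b c q
  proof -
    have "(\<Sum>l<32. (p * dl a l + q * W32 a l) * (c * dl b l)) = c * (\<Sum>l<32. (p * dl a l + q * W32 a l) * dl b l)"
      by (simp add: sum_distrib_left algebra_simps)
    thus ?thesis using that by (simp only: sum_dl_right) simp
  qed
  have E2: "(\<Sum>l<32. (c * dl a l) * (p * dl b l + q * W32 b l)) = c * (p * dl a b + q * W32 b a)" if "a < 32" "b < 32" for a b c q
  proof -
    have "(\<Sum>l<32. (c * dl a l) * (p * dl b l + q * W32 b l)) = c * (\<Sum>l<32. dl a l * (p * dl b l + q * W32 b l))"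
      by (simp add: sum_distrib_left algebra_simps)
    thus ?thesis using that by (simp only: sum_dl_left) (simp add: dl_def)
  qed
  show ?thesis
  proof (cases "i < 32")
    case i: True
    show ?thesis
    proof (cases "j < 32")
      case j: True
      have "(\<Sum>l<64. Xm p q r i l * Xm p q r j l) =
        (\<Sum>l<32. (p * dl i l + q * W32 i l) * (p * dl j l + q * W32 j l)) + (\<Sum>u<32. (r * dl i u) * (r * dl j u))"
        unfolding sum64 using i j by (simp add: Xm_TL Xm_TR)
      also have "\<dots> = (if i = j then p^2 + 17*q^2 + r^2 else 0)"
        using i j by (simp only: A[OF i j] D[OF i j]) (simp add: dl_def power2_eq_square)
      finally show ?thesis .
    next
      case j: False
      define b where "b = j - 32"
      have jb: "j = 32 + b" "b < 32" using j assms unfolding b_def by auto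
      have "(\<Sum>l<64. Xm p q r i l * Xm p q r j l) =
        (\<Sum>l<32. (p * dl i l + q * W32 i l) * (- r * dl b l)) + (\<Sum>u<32. (r * dl i u) * (p * dl b u + (-q) * W32 b u))"
        unfolding sum64 jb(1) using i jb(2) by (simp add: Xm_TL Xm_TR Xm_BL Xm_BR)
      also have "\<dots> = 0"
        using i jb(2) by (simp only: E[OF i jb(2)] E2[OF i jb(2)]) (simp add: dl_def W_skew[of i b] algebra_simps)
      finally show ?thesis using jb i by simp
    qed
  next
    case i: False
    define a where "a = i - 32"
    have ia: "i = 32 + a" "a < 32" using i assms unfolding a_def by auto
    show ?thesis
    proof (cases "j < 32")
      case j: True
      have "(\<Sum>l<64. Xm p q r i l * Xm p q r j l) =
        (\<Sum>l<32. (- r * dl a l) * (p * dl j l + q * W32 j l)) + (\<Sum>u<32. (p * dl a u + (-q) * W32 a u) * (r * dl j u))"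
        unfolding sum64 ia(1) using j ia(2) by (simp add: Xm_TL Xm_TR Xm_BL Xm_BR)
      also have "\<dots> = 0"
        using j ia(2) by (simp only: E[OF ia(2) j] E2[OF ia(2) j]) (simp add: dl_def W_skew[of a j] algebra_simps)
      finally show ?thesis using ia j by simp
    next
      case j: False
      define b where "b = j - 32"
      have jb: "j = 32 + b" "b < 32" using j assms unfolding b_def by auto
      have "(\<Sum>l<64. Xm p q r i l * Xm p q r j l) =
        (\<Sum>l<32. (- r * dl a l) * (- r * dl b l)) + (\<Sum>u<32. (p * dl a u + (-q) * W32 a u) * (p * dl b u + (-q) * W32 b u))"
        unfolding sum64 ia(1) jb(1) using ia(2) jb(2) by (simp add: Xm_BL Xm_BR)
      also have "\<dots> = (if a = b then p^2 + 17*q^2 + r^2 else 0)"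
        using ia(2) jb(2) by (simp only: A[of a b "-q", OF ia(2) jb(2)] D[OF ia(2) jb(2)]) (simp add: dl_def power2_eq_square)
      finally show ?thesis using ia jb by simp
    qed
  qed
qed


definition inL :: "(nat \<Rightarrow> int) \<Rightarrow> bool" where
  "inL x \<longleftrightarrow> (\<forall>l\<ge>64. x l = 0) \<and> (\<forall>l<32. [x (32+l) = (\<Sum>i<32. x i * W32 i l)] (mod 3))"

lemma WWT: "a < 32 \<Longrightarrow> l < 32 \<Longrightarrow> (\<Sum>i<32. W32 a i * W32 i l) = -17 * dl a l"
proof -
  assume a: "a < 32" and l: "l < 32"
  have "(\<Sum>i<32. W32 a i * W32 i l) = (\<Sum>i<32. - (W32 a i * W32 l i))"
    by (rule sum.cong) (use l W_skew[of _ l] in auto)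
  also have "\<dots> = - (\<Sum>i<32. W32 a i * W32 l i)" by (simp add: sum_negf)
  also have "\<dots> = -17 * dl a l" using W_orth[OF a l] by (simp add: dl_def)
  finally show ?thesis .
qed

lemma Xm_inL:
  assumes p: "3 dvd p" and qr: "3 dvd q - r" and i: "i < 64"
  shows "inL (Xm p q r i)"
  unfolding inL_def
proof (intro conjI allI impI)
  fix l :: nat assume "64 \<le> l" thus "Xm p q r i l = 0" unfolding Xm_def by simp
next
  fix l :: nat assume l: "l < 32"
  show "[Xm p q r i (32+l) = (\<Sum>i'<32. Xm p q r i i' * W32 i' l)] (mod 3)"
  proof (cases "i < 32")
    case True
    have "(\<Sum>i'<32. Xm p q r i i' * W32 i' l) = (\<Sum>i'<32. p * (dl i i' * W32 i' l) + q * (W32 i i' * W32 i' l))"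
      by (rule sum.cong) (use True in \<open>auto simp: Xm_TL algebra_simps\<close>)
    also have "\<dots> = p * (\<Sum>i'<32. dl i i' * W32 i' l) + q * (\<Sum>i'<32. W32 i i' * W32 i' l)"
      by (simp add: sum.distrib sum_distrib_left)
    also have "\<dots> = p * W32 i l + q * (-17 * dl i l)"
      by (simp only: sum_dl_left WWT[OF True l]) (simp add: True)
    finally have S: "(\<Sum>i'<32. Xm p q r i i' * W32 i' l) = p * W32 i l + q * (-17 * dl i l)" .
    have X: "Xm p q r i (32+l) = r * dl i l" using True l by (simp add: Xm_TR)
    have rq: "3 dvd r - q" using qr by (metis dvd_minus_iff minus_diff_eq)
    have "r * dl i l - (p * W32 i l + q * (-17 * dl i l)) = (-(q - r) * dl i l + 3 * (6 * q * dl i l)) - p * W32 i l"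
      by (simp add: algebra_simps)
    moreover have "3 dvd (-(q - r) * dl i l + 3 * (6 * q * dl i l)) - p * W32 i l"
      using p rq by (intro dvd_diff dvd_add) (simp_all add: dvd_mult2)
    ultimately have "3 dvd r * dl i l - (p * W32 i l + q * (-17 * dl i l))" by metis
    thus ?thesis unfolding S X cong_iff_dvd_diff .
  next
    case False
    define a where "a = i - 32"
    have ia: "i = 32 + a" "a < 32" using False i unfolding a_def by auto
    have "(\<Sum>i'<32. Xm p q r i i' * W32 i' l) = (\<Sum>i'<32. (- r) * (dl a i' * W32 i' l))"
    proof (rule sum.cong)
      fix i' assume "i' \<in> {..<32::nat}"
      hence "Xm p q r i i' = - r * dl a i'" unfolding ia(1) using Xm_BL[OF ia(2)] by simp
      thus "Xm p q r i i' * W32 i' l = (- r) * (dl a i' * W32 i' l)" by simp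
    qed simp
    also have "\<dots> = (- r) * (\<Sum>i'<32. dl a i' * W32 i' l)"
      by (simp add: sum_distrib_left)
    also have "\<dots> = - r * W32 a l"
      by (simp only: sum_dl_left) (simp add: ia)
    finally have S: "(\<Sum>i'<32. Xm p q r i i' * W32 i' l) = - r * W32 a l" .
    have X: "Xm p q r i (32+l) = p * dl a l + (-q) * W32 a l" using ia l by (simp add: Xm_BR)
    have "p * dl a l + (-q) * W32 a l - (- r * W32 a l) = p * dl a l - (q - r) * W32 a l"
      by (simp add: algebra_simps)
    moreover have "3 dvd p * dl a l - (q - r) * W32 a l"
      using p qr by (intro dvd_diff) (simp_all add: dvd_mult2)
    ultimately have "3 dvd p * dl a l + (-q) * W32 a l - (- r * W32 a l)" by metis
    thus ?thesis unfolding S X cong_iff_dvd_diff .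
  qed
qed

lemma inL_constrA:
  assumes "inL x"
  shows "(\<lambda>l. real_of_int (x l) / sqrt 3) \<in> constrA 3 64 C3W"
proof -
  define c where "c = (\<lambda>l. if l < 64 then x l mod 3 else 0)"
  define z where "z = (\<lambda>l. x l div 3)"
  have cC: "c \<in> C3W"
    unfolding C3W_def code_gen_def mem_Collect_eq
  proof (intro exI[of _ x] conjI allI impI)
    fix j :: nat assume j: "j < 64"
    show "c j = (\<Sum>i<32. x i * gen_IW 32 W32 i j) mod 3"
    proof (cases "j < 32")
      case True
      have "(\<Sum>i<32. x i * gen_IW 32 W32 i j) = (\<Sum>i<32. x i * dl j i)"
        by (rule sum.cong) (auto simp: gen_IW_def True dl_def)
      also have "\<dots> = x j" by (simp only: sum_dl_right) (simp add: True)
      finally show ?thesis unfolding c_def using j by simp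
    next
      case False
      define l where "l = j - 32"
      have jl: "j = 32 + l" "l < 32" using False j unfolding l_def by auto
      have "(\<Sum>i<32. x i * gen_IW 32 W32 i j) = (\<Sum>i<32. x i * W32 i l)"
        by (rule sum.cong) (auto simp: gen_IW_def jl)
      moreover have "[x j = (\<Sum>i<32. x i * W32 i l)] (mod 3)"
        using assms jl unfolding inL_def by blast
      ultimately show ?thesis unfolding c_def cong_def using j by simp
    qed
  next
    fix j :: nat assume "64 \<le> j" thus "c j = 0" unfolding c_def by simp
  qed
  show ?thesis
    unfolding constrA_def mem_Collect_eq
  proof (intro bexI[OF _ cC] exI[of _ z] conjI allI impI)
    fix j :: nat assume "j < 64"
    hence "c j + 3 * z j = x j" unfolding c_def z_def by simp
    thus "real_of_int (x j) / sqrt 3 = real_of_int (c j + 3 * z j) / sqrt (real_of_int 3)" by simp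
  next
    fix j :: nat assume "64 \<le> j"
    thus "real_of_int (x j) / sqrt 3 = 0" using assms unfolding inL_def by simp
  qed
qed

lemma inL_comb:
  fixes M :: "nat \<Rightarrow> int" and X :: "nat \<Rightarrow> nat \<Rightarrow> int"
  assumes "\<And>j. j < 64 \<Longrightarrow> inL (X j)"
  shows "inL (\<lambda>l. \<Sum>j<64. M j * X j l)"
  unfolding inL_def
proof (intro conjI allI impI)
  fix l :: nat assume "64 \<le> l"
  thus "(\<Sum>j<64. M j * X j l) = 0" using assms unfolding inL_def by simp
next
  fix l :: nat assume l: "l < 32"
  have "[(\<Sum>j<64. M j * X j (32+l)) = (\<Sum>j<64. M j * (\<Sum>i<32. X j i * W32 i l))] (mod 3)"
    using assms l unfolding inL_def by (intro cong_sum cong_scalar_left) auto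
  also have "(\<Sum>j<64. M j * (\<Sum>i<32. X j i * W32 i l)) = (\<Sum>i<32. (\<Sum>j<64. M j * X j i) * W32 i l)"
    by (simp add: sum_distrib_left sum_distrib_right algebra_simps sum.swap[of _ "{..<64}"])
  finally show "[(\<Sum>j<64. M j * X j (32+l)) = (\<Sum>i<32. (\<Sum>j<64. M j * X j i) * W32 i l)] (mod 3)" .
qed


lemma frame_of:
  fixes X M :: "nat \<Rightarrow> nat \<Rightarrow> int" and k s :: int
  assumes rows: "\<And>j. j < 64 \<Longrightarrow> inL (X j)"
    and gX: "\<And>i j. i < 64 \<Longrightarrow> j < 64 \<Longrightarrow> (\<Sum>l<64. X i l * X j l) = (if i = j then s else 0)"
    and gM: "\<And>i j. i < 64 \<Longrightarrow> j < 64 \<Longrightarrow> (\<Sum>l<64. M i l * M j l) = (if i = j then k else 0)"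
  shows "has_frame 64 (constrA 3 64 C3W) (real_of_int (k * s) / 3)"
proof -
  define Y where "Y = (\<lambda>i l. \<Sum>j<64. M i j * X j l)"
  define f where "f = (\<lambda>i l. real_of_int (Y i l) / sqrt 3)"
  have mem: "f i \<in> constrA 3 64 C3W" if "i < 64" for i
  proof -
    have "inL (\<lambda>l. \<Sum>j<64. M i j * X j l)" by (rule inL_comb) (rule rows)
    hence "inL (Y i)" unfolding Y_def .
    thus ?thesis unfolding f_def by (rule inL_constrA)
  qed
  have gY: "(\<Sum>l<64. Y i l * Y i' l) = (if i = i' then k * s else 0)" if "i < 64" "i' < 64" for i i'
  proof -
    have "(\<Sum>l<64. Y i l * Y i' l) = (\<Sum>l<64. \<Sum>j'<64. \<Sum>j<64. M i j * M i' j' * (X j l * X j' l))"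
      unfolding Y_def by (simp add: sum_product mult_ac)
    also have "\<dots> = (\<Sum>j'<64. \<Sum>l<64. \<Sum>j<64. M i j * M i' j' * (X j l * X j' l))"
      by (rule sum.swap)
    also have "\<dots> = (\<Sum>j'<64. \<Sum>j<64. \<Sum>l<64. M i j * M i' j' * (X j l * X j' l))"
      by (rule sum.cong[OF refl], rule sum.swap)
    also have "\<dots> = (\<Sum>j'<64. \<Sum>j<64. M i j * M i' j' * (\<Sum>l<64. X j l * X j' l))"
      by (simp add: sum_distrib_left)
    also have "\<dots> = (\<Sum>j'<64. \<Sum>j<64. M i j * M i' j' * (if j = j' then s else 0))"
      by (intro sum.cong refl) (simp add: gX)
    also have "\<dots> = (\<Sum>j<64. M i j * M i' j * s)"
      by (intro sum.cong refl) (simp add: if_distrib[of "\<lambda>x. _ * x"] cong: if_cong)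
    also have "\<dots> = s * (\<Sum>j<64. M i j * M i' j)"
      by (simp add: sum_distrib_left mult_ac)
    also have "\<dots> = (if i = i' then k * s else 0)" using gM[OF that] by simp
    finally show ?thesis .
  qed
  have inner: "inner_N 64 (f i) (f i') = (if i = i' then real_of_int (k * s) / 3 else 0)"
    if "i < 64" "i' < 64" for i i'
  proof -
    have "inner_N 64 (f i) (f i') = (\<Sum>l<64. real_of_int (Y i l * Y i' l) / 3)"
      unfolding inner_N_def f_def by (intro sum.cong refl) simp
    also have "\<dots> = real_of_int (\<Sum>l<64. Y i l * Y i' l) / 3"
      by (simp add: sum_divide_distrib)
    also have "\<dots> = (if i = i' then real_of_int (k * s) / 3 else 0)"
      using gY[OF that] by simp
    finally show ?thesis .
  qed
  show ?thesis unfolding has_frame_def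
    by (rule exI[of _ f]) (use mem inner in auto)
qed


definition Qm :: "int \<Rightarrow> int \<Rightarrow> int \<Rightarrow> int \<Rightarrow> nat \<Rightarrow> nat \<Rightarrow> int" where
  "Qm a b c d u v = [[a,b,c,d],[-b,a,-d,c],[-c,d,a,-b],[-d,-c,b,a]] ! u ! v"

definition Mq :: "int \<Rightarrow> int \<Rightarrow> int \<Rightarrow> int \<Rightarrow> nat \<Rightarrow> nat \<Rightarrow> int" where
  "Mq a b c d i l = (if i div 4 = l div 4 then Qm a b c d (i mod 4) (l mod 4) else 0)"

lemma sum4: "sum f {..<4*n} = (\<Sum>b<n. \<Sum>u<4. f (4*b+u))" for f :: "nat \<Rightarrow> 'a::comm_monoid_add"
proof (induction n)
  case 0 then show ?case by simp
next
  case (Suc n)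
  have "sum f {..<4*Suc n} = sum f {..<4*n+4}" by (simp add: add.commute)
  also have "\<dots> = sum f {..<4*n} + (\<Sum>u<4. f (4*n+u))" by (rule sum_split_nat)
  finally show ?case using Suc by simp
qed

lemma lt4: "(u::nat) < 4 \<Longrightarrow> u = 0 \<or> u = 1 \<or> u = 2 \<or> u = 3" by auto

lemma Qgram: assumes "u1 < 4" "u2 < 4"
  shows "(\<Sum>u<4. Qm a b c d u1 u * Qm a b c d u2 u) = (if u1 = u2 then a^2+b^2+c^2+d^2 else 0)"
proof -
  have S: "{..<4::nat} = {0,1,2,3}" by auto
  show ?thesis using lt4[OF assms(1)] lt4[OF assms(2)]
    by (auto simp: S Qm_def power2_eq_square algebra_simps)
qed

lemma Mq_gram: assumes "i < 64" "j < 64"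
  shows "(\<Sum>l<64. Mq a b c d i l * Mq a b c d j l) = (if i = j then a^2+b^2+c^2+d^2 else 0)"
proof -
  let ?G = "\<Sum>u<4. Qm a b c d (i mod 4) u * Qm a b c d (j mod 4) u"
  have "(\<Sum>l<64. Mq a b c d i l * Mq a b c d j l) = (\<Sum>l<4*16. Mq a b c d i l * Mq a b c d j l)" by simp
  also have "\<dots> = (\<Sum>bb<16. \<Sum>u<4. Mq a b c d i (4*bb+u) * Mq a b c d j (4*bb+u))" by (rule sum4)
  also have "\<dots> = (\<Sum>bb<16. if i div 4 = bb \<and> j div 4 = bb then ?G else 0)"
  proof (rule sum.cong[OF refl])
    fix bb assume "bb \<in> {..<16::nat}"
    show "(\<Sum>u<4. Mq a b c d i (4*bb+u) * Mq a b c d j (4*bb+u)) = (if i div 4 = bb \<and> j div 4 = bb then ?G else 0)"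
    proof (cases "i div 4 = bb \<and> j div 4 = bb")
      case True thus ?thesis by (auto simp: Mq_def intro!: sum.cong)
    next
      case False thus ?thesis by (auto simp: Mq_def intro!: sum.neutral)
    qed
  qed
  also have "\<dots> = (if i div 4 = j div 4 then ?G else 0)"
    using assms by (simp add: sum.delta' cong: conj_cong)
  also have "\<dots> = (if i = j then a^2+b^2+c^2+d^2 else 0)"
  proof -
    have "i = j \<longleftrightarrow> i div 4 = j div 4 \<and> i mod 4 = j mod 4" by (metis div_mult_mod_eq)
    thus ?thesis using Qgram[of "i mod 4" "j mod 4" a b c d] by auto
  qed
  finally show ?thesis .
qed


theorem lemma7p2:
  fixes k :: nat
  assumes "k > 0"
  shows "has_frame 64 (constrA 3 64 C3W) (real (7 * k)) \<and>
         has_frame 64 (constrA 3 64 C3W) (real (23 * k))"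
proof -
  obtain a b c d where abcd: "int k = a^2+b^2+c^2+d^2" using s4_nat[of k] unfolding s4_def by blast
  have gM: "\<And>i j. i < 64 \<Longrightarrow> j < 64 \<Longrightarrow> (\<Sum>l<64. Mq a b c d i l * Mq a b c d j l) = (if i = j then int k else 0)"
    using Mq_gram abcd by simp
  have f7: "has_frame 64 (constrA 3 64 C3W) (real_of_int (int k * (0^2 + 17*1^2 + (-2)^2)) / 3)"
    by (rule frame_of[OF Xm_inL Xm_gram gM]) simp_all
  have f23: "has_frame 64 (constrA 3 64 C3W) (real_of_int (int k * (6^2 + 17*1^2 + 4^2)) / 3)"
    by (rule frame_of[OF Xm_inL Xm_gram gM]) simp_all
  show ?thesis using f7 f23 by simp
qed

end
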